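(* Consider the following iteration (Kaczmarz method with line-search), started at $x_0\in\mathbb{R}^n$: for $k=0,1,2,\ldots$, set $d=P(x_k)-x_k$ and $\delta=\|d\|^2$; if $\delta=0$, terminate and return $x_k$; otherwise set $\rho=\|r(x_k)\|^2$, $s=\frac12+\frac{\rho}{2\delta}$ and $x_{k+1}=x_k+sd$. Then either the iteration terminates after finitely many steps and returns some $x_k$ with $Ax_k=b$, or it generates a well-defined infinite sequence $(x_k)_k$ such that for all $k$ and all $x^*\in\mathbb{R}^n$ with $Ax^*=b$: \[x_{k+1}=\operatorname{argmin}_{\xi\in\operatorname{aff}(x_k,P(x_k))}\|\xi-x^*\|^2,\qquad \|x_k-x^*\|^2-\|x_{k+1}-x^*\|^2=\frac{(\|r(x_k)\|^2+\|P(x_k)-x_k\|^2)^2}{4\|P(x_k)-x_k\|^2},\] and in particular $\|x_{k+1}-x^*\|^2\le\|P(x_k)-x^*\|^2$.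
   Context: Let $A=(a_1,\ldots,a_m)^T\in\mathbb{R}^{m\times n}$ with rows $a_j\in\mathbb{R}^n\setminus\{0\}$, and let $b\in\mathbb{R}^m$ lie in the range of $A$. Norms are Euclidean. For $j=1,\ldots,m$ define the projectors $P_j:\mathbb{R}^n\to\mathbb{R}^n$, $P_j(x)=\big(I-\frac{a_ja_j^T}{\|a_j\|^2}\big)x+\frac{b_j}{\|a_j\|^2}a_j$ (the orthogonal projection onto $\{z:a_j^Tz=b_j\}$), and the Kaczmarz cycle $P=P_m\circ\cdots\circ P_1$. The residual $r:\mathbb{R}^n\to\mathbb{R}^m$ is defined by $r_1(x)=(a_1^Tx-b_1)/\|a_1\|$ and $r_j(x)=(a_j^T(P_{j-1}\circ\cdots\circ P_1)(x)-b_j)/\|a_j\|$ for $j=2,\ldots,m$. $\operatorname{aff}(\cdot)$ denotes the affine hull. *)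

theory Defs
  imports "HOL-Analysis.Analysis"
begin

text \<open>Rows are indexed 0..m-1: row j of A is a j, right-hand side b j.\<close>

definition proj :: "(nat \<Rightarrow> real^'n) \<Rightarrow> (nat \<Rightarrow> real) \<Rightarrow> nat \<Rightarrow> real^'n \<Rightarrow> real^'n" where
  "proj a b j x = x - ((inner (a j) x) / (norm (a j))^2) *\<^sub>R a j + (b j / (norm (a j))^2) *\<^sub>R a j"

fun cyc :: "(nat \<Rightarrow> real^'n) \<Rightarrow> (nat \<Rightarrow> real) \<Rightarrow> nat \<Rightarrow> real^'n \<Rightarrow> real^'n" where
  "cyc a b 0 x = x"
| "cyc a b (Suc k) x = proj a b k (cyc a b k x)"

definition kcycle :: "nat \<Rightarrow> (nat \<Rightarrow> real^'n) \<Rightarrow> (nat \<Rightarrow> real) \<Rightarrow> real^'n \<Rightarrow> real^'n" where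
  "kcycle m a b x = cyc a b m x"

definition resid :: "(nat \<Rightarrow> real^'n) \<Rightarrow> (nat \<Rightarrow> real) \<Rightarrow> nat \<Rightarrow> real^'n \<Rightarrow> real" where
  "resid a b j x = (inner (a j) (cyc a b j x) - b j) / norm (a j)"

definition resid_sq :: "nat \<Rightarrow> (nat \<Rightarrow> real^'n) \<Rightarrow> (nat \<Rightarrow> real) \<Rightarrow> real^'n \<Rightarrow> real" where
  "resid_sq m a b x = (\<Sum>j<m. (resid a b j x)^2)"

text \<open>one step of Kaczmarz with line search (used only when delta \<noteq> 0)\<close>
definition ls_step :: "nat \<Rightarrow> (nat \<Rightarrow> real^'n) \<Rightarrow> (nat \<Rightarrow> real) \<Rightarrow> real^'n \<Rightarrow> real^'n" where
  "ls_step m a b x =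
     (let d = kcycle m a b x - x; \<delta> = (norm d)^2; \<rho> = resid_sq m a b x;
          s = 1/2 + \<rho> / (2 * \<delta>)
      in x + s *\<^sub>R d)"

definition ls_iter :: "nat \<Rightarrow> (nat \<Rightarrow> real^'n) \<Rightarrow> (nat \<Rightarrow> real) \<Rightarrow> real^'n \<Rightarrow> nat \<Rightarrow> real^'n" where
  "ls_iter m a b x0 k = (ls_step m a b ^^ k) x0"

end

theory Submission
  imports Defs
begin

lemma nsq: "(norm (x + y))^2 = (norm x)^2 + 2 * inner x y + (norm (y::'a::real_inner))^2"
  by (simp add: power2_norm_eq_inner inner_add_left inner_add_right inner_commute)
lemma nsc: "(norm (c *\<^sub>R (v::'a::real_normed_vector)))^2 = c^2 * (norm v)^2"
  by (simp add: power_mult_distrib)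

lemma proj_pyth:
  assumes nz: "a j \<noteq> 0" and sol: "inner (a j) xs = b j"
  shows "(norm (y - xs))^2 = (norm (proj a b j y - xs))^2 + ((inner (a j) y - b j)/norm (a j))^2"
proof -
  define c where "c = (inner (a j) y - b j)/(norm (a j))^2"
  have n2: "(norm (a j))^2 = inner (a j) (a j)" by (simp add: power2_norm_eq_inner)
  have npos: "(norm (a j))^2 \<noteq> 0" using nz by simp
  have p: "proj a b j y = y - c *\<^sub>R a j" unfolding proj_def c_def
    by (simp add: diff_divide_distrib scaleR_diff_left)
  have cn: "c * (norm (a j))^2 = inner (a j) y - b j" unfolding c_def using npos by simp
  have o: "inner (proj a b j y - xs) (c *\<^sub>R a j) = 0"
  proof -
    have "inner (proj a b j y - xs) (a j) = inner y (a j) - c * (norm (a j))^2 - inner xs (a j)"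
      unfolding p n2 by (simp add: inner_diff_left)
    also have "\<dots> = 0" using cn sol by (simp add: inner_commute)
    finally show ?thesis by simp
  qed
  have e: "y - xs = (proj a b j y - xs) + c *\<^sub>R a j" unfolding p by simp
  have "(norm (y - xs))^2 = (norm (proj a b j y - xs))^2 + c^2 * (norm (a j))^2"
    unfolding e nsq o nsc by simp
  also have "c^2 * (norm (a j))^2 = ((inner (a j) y - b j)/norm (a j))^2"
    unfolding c_def using npos by (simp add: power_divide power2_eq_square)
  finally show ?thesis .
qed

lemma cyc_decrease:
  assumes nz: "\<forall>j<m. a j \<noteq> 0" and sol: "\<forall>j<m. inner (a j) xs = b j"
  shows "k \<le> m \<Longrightarrow> (norm (x - xs))^2 - (norm (cyc a b k x - xs))^2 = (\<Sum>j<k. (resid a b j x)^2)"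
proof (induction k)
  case 0 then show ?case by simp
next
  case (Suc k)
  have k: "k < m" using Suc by simp
  have "(norm (cyc a b k x - xs))^2 = (norm (cyc a b (Suc k) x - xs))^2 + (resid a b k x)^2"
    using proj_pyth[of a k xs b "cyc a b k x"] nz sol k unfolding resid_def by simp
  then show ?case using Suc by simp
qed

lemma ls_decrease:
  assumes nz: "\<forall>j<m. a j \<noteq> 0" and sol: "\<forall>j<m. inner (a j) xs = b j"
  shows "(norm (x - xs))^2 - (norm (kcycle m a b x - xs))^2 = resid_sq m a b x"
  using cyc_decrease[OF nz sol, of m x] unfolding kcycle_def resid_sq_def by simp

lemma fixed_sol:
  assumes nz: "\<forall>j<m. a j \<noteq> 0" and sol: "\<forall>j<m. inner (a j) xs = b j"
    and fx: "kcycle m a b x = x"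
  shows "\<forall>j<m. inner (a j) x = b j"
proof -
  have "resid_sq m a b x = 0" using ls_decrease[OF nz sol, of x] fx by simp
  then have z: "\<forall>j<m. resid a b j x = 0"
    unfolding resid_sq_def by (simp add: sum_nonneg_eq_0_iff)
  have zz: "j < m \<Longrightarrow> inner (a j) (cyc a b j x) = b j" for j
    using z nz unfolding resid_def by simp
  have "k \<le> m \<Longrightarrow> cyc a b k x = x" for k
  proof (induction k)
    case 0 then show ?case by simp
  next
    case (Suc k)
    then have k: "k < m" by simp
    then have "inner (a k) x = b k" using zz[OF k] Suc by simp
    then show ?case using Suc k by (simp add: proj_def)
  qed
  then show ?thesis using zz by simp
qed

lemma step_props:
  assumes nz: "\<forall>j<m. a j \<noteq> 0" and sol: "\<forall>j<m. inner (a j) xs = b j"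
    and ne: "kcycle m a b x \<noteq> x"
  shows "ls_step m a b x = (ARG_MIN (\<lambda>\<xi>. (norm (\<xi> - xs))^2) \<xi>. \<xi> \<in> affine hull {x, kcycle m a b x})
      \<and> (norm (x - xs))^2 - (norm (ls_step m a b x - xs))^2
          = (resid_sq m a b x + (norm (kcycle m a b x - x))^2)^2 / (4 * (norm (kcycle m a b x - x))^2)
      \<and> (norm (ls_step m a b x - xs))^2 \<le> (norm (kcycle m a b x - xs))^2"
proof -
  define P where "P = kcycle m a b x"
  define d where "d = P - x"
  define \<delta> where "\<delta> = (norm d)^2"
  define \<rho> where "\<rho> = resid_sq m a b x"
  define s where "s = 1/2 + \<rho> / (2 * \<delta>)"
  define x1 where "x1 = ls_step m a b x"
  have dpos: "\<delta> > 0" using ne unfolding \<delta>_def d_def P_def by simp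
  have x1: "x1 = x + s *\<^sub>R d" unfolding x1_def ls_step_def Let_def s_def \<delta>_def \<rho>_def d_def P_def ..
  have dec: "(norm (x - xs))^2 - (norm (P - xs))^2 = \<rho>"
    using ls_decrease[OF nz sol] unfolding P_def \<rho>_def by simp
  have "P - xs = (x - xs) + d" unfolding d_def by simp
  then have "(norm (P - xs))^2 = (norm (x - xs))^2 + 2 * inner (x - xs) d + \<delta>"
    unfolding \<delta>_def by (simp only: nsq)
  then have key: "inner (x - xs) d = - (\<rho> + \<delta>) / 2" using dec by simp
  have s\<delta>: "s * \<delta> = (\<rho> + \<delta>) / 2" unfolding s_def using dpos by (simp add: field_simps)
  have orth: "inner (x1 - xs) d = 0"
  proof -
    have "x1 - xs = (x - xs) + s *\<^sub>R d" unfolding x1 by simp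
    then have "inner (x1 - xs) d = inner (x - xs) d + s * \<delta>"
      unfolding \<delta>_def power2_norm_eq_inner by (simp add: inner_add_left inner_diff_left)
    then show ?thesis using key s\<delta> by (simp add: field_simps)
  qed
  have pyth: "(norm (x + t *\<^sub>R d - xs))^2 = (norm (x1 - xs))^2 + (t - s)^2 * \<delta>" for t
  proof -
    have e: "x + t *\<^sub>R d - xs = (x1 - xs) + (t - s) *\<^sub>R d" unfolding x1 by (simp add: scaleR_diff_left)
    have o: "inner (x1 - xs) ((t - s) *\<^sub>R d) = 0" using orth by simp
    show ?thesis unfolding e nsq o nsc \<delta>_def by simp
  qed
  have hull: "affine hull {x, P} = range (\<lambda>t. x + t *\<^sub>R d)"
    unfolding affine_hull_2_alt d_def ..
  have x1in: "x1 \<in> affine hull {x, P}" unfolding hull x1 by (rule rangeI)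
  have argmin: "(ARG_MIN (\<lambda>\<xi>. (norm (\<xi> - xs))^2) \<xi>. \<xi> \<in> affine hull {x, P}) = x1"
    unfolding arg_min_def
  proof (rule some_equality)
    have "(norm (x1 - xs))^2 \<le> (norm (y - xs))^2" if yin: "y \<in> affine hull {x, P}" for y
    proof -
      obtain t where y: "y = x + t *\<^sub>R d" using yin unfolding hull by auto
      have "0 \<le> (t - s)^2 * \<delta>" using dpos by simp
      then show ?thesis unfolding y pyth by linarith
    qed
    then show "is_arg_min (\<lambda>\<xi>. (norm (\<xi> - xs))^2) (\<lambda>\<xi>. \<xi> \<in> affine hull {x, P}) x1"
      unfolding is_arg_min_def using x1in by (meson not_le)
  next
    fix y assume "is_arg_min (\<lambda>\<xi>. (norm (\<xi> - xs))^2) (\<lambda>\<xi>. \<xi> \<in> affine hull {x, P}) y"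
    then have yin: "y \<in> affine hull {x, P}" and nl: "\<not> (norm (x1 - xs))^2 < (norm (y - xs))^2"
      unfolding is_arg_min_def using x1in by auto
    obtain t where y: "y = x + t *\<^sub>R d" using yin unfolding hull by auto
    have "(t - s)^2 * \<delta> \<le> 0" using nl unfolding y pyth by linarith
    then have "(t - s)^2 \<le> 0" using dpos by (simp add: mult_le_0_iff)
    then have "t = s" by simp
    then show "y = x1" using y x1 by simp
  qed
  have d0: "(norm (x - xs))^2 = (norm (x1 - xs))^2 + s^2 * \<delta>"
    using pyth[of 0] by simp
  have "s^2 * \<delta> = (\<rho> + \<delta>)^2 / (4 * \<delta>)"
    using dpos unfolding s_def by (simp add: power2_eq_square field_simps)
  then have formula: "(norm (x - xs))^2 - (norm (x1 - xs))^2 = (\<rho> + \<delta>)^2 / (4 * \<delta>)"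
    using d0 by linarith
  have "(norm (P - xs))^2 = (norm (x1 - xs))^2 + (1 - s)^2 * \<delta>"
    using pyth[of 1] unfolding d_def by simp
  moreover have "0 \<le> (1 - s)^2 * \<delta>" using dpos by simp
  ultimately have ineq: "(norm (x1 - xs))^2 \<le> (norm (P - xs))^2" by linarith
  show ?thesis
    unfolding x1_def[symmetric] P_def[symmetric] \<rho>_def[symmetric] d_def[symmetric] \<delta>_def[symmetric]
    by (intro conjI) (simp_all only: argmin formula ineq)
qed

theorem corollary5:
  fixes m :: nat and a :: "nat \<Rightarrow> real^'n" and b :: "nat \<Rightarrow> real" and x0 :: "real^'n"
  assumes rows_nz: "\<forall>j<m. a j \<noteq> 0"
    and b_range: "\<exists>z. \<forall>j<m. inner (a j) z = b j"
  shows "(\<exists>k. (\<forall>i<k. kcycle m a b (ls_iter m a b x0 i) \<noteq> ls_iter m a b x0 i)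
              \<and> kcycle m a b (ls_iter m a b x0 k) = ls_iter m a b x0 k
              \<and> (\<forall>j<m. inner (a j) (ls_iter m a b x0 k) = b j))
       \<or> ((\<forall>k. kcycle m a b (ls_iter m a b x0 k) \<noteq> ls_iter m a b x0 k)
          \<and> (\<forall>k xs. (\<forall>j<m. inner (a j) xs = b j) \<longrightarrow>
               (let xk = ls_iter m a b x0 k; xk1 = ls_iter m a b x0 (Suc k);
                    Pk = kcycle m a b xk
                in xk1 = (ARG_MIN (\<lambda>\<xi>. (norm (\<xi> - xs))^2) \<xi>. \<xi> \<in> affine hull {xk, Pk})
                 \<and> (norm (xk - xs))^2 - (norm (xk1 - xs))^2
                     = (resid_sq m a b xk + (norm (Pk - xk))^2)^2 / (4 * (norm (Pk - xk))^2)
                 \<and> (norm (xk1 - xs))^2 \<le> (norm (Pk - xs))^2)))"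
proof (cases "\<exists>k. kcycle m a b (ls_iter m a b x0 k) = ls_iter m a b x0 k")
  case True
  obtain z where z: "\<forall>j<m. inner (a j) z = b j" using b_range by blast
  define k where "k = (LEAST k. kcycle m a b (ls_iter m a b x0 k) = ls_iter m a b x0 k)"
  have k: "kcycle m a b (ls_iter m a b x0 k) = ls_iter m a b x0 k"
    unfolding k_def by (rule LeastI_ex[OF True])
  have lt: "\<forall>i<k. kcycle m a b (ls_iter m a b x0 i) \<noteq> ls_iter m a b x0 i"
  proof (intro allI impI)
    fix i assume "i < k"
    then show "kcycle m a b (ls_iter m a b x0 i) \<noteq> ls_iter m a b x0 i"
      unfolding k_def by (rule not_less_Least)
  qed
  have sk: "\<forall>j<m. inner (a j) (ls_iter m a b x0 k) = b j" by (rule fixed_sol[OF rows_nz z k])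
  show ?thesis by (rule disjI1, rule exI[of _ k], intro conjI, fact lt, fact k, fact sk)
next
  case False
  have nf: "\<forall>k. kcycle m a b (ls_iter m a b x0 k) \<noteq> ls_iter m a b x0 k" using False by blast
  have "\<forall>k xs. (\<forall>j<m. inner (a j) xs = b j) \<longrightarrow>
               (let xk = ls_iter m a b x0 k; xk1 = ls_iter m a b x0 (Suc k);
                    Pk = kcycle m a b xk
                in xk1 = (ARG_MIN (\<lambda>\<xi>. (norm (\<xi> - xs))^2) \<xi>. \<xi> \<in> affine hull {xk, Pk})
                 \<and> (norm (xk - xs))^2 - (norm (xk1 - xs))^2
                     = (resid_sq m a b xk + (norm (Pk - xk))^2)^2 / (4 * (norm (Pk - xk))^2)
                 \<and> (norm (xk1 - xs))^2 \<le> (norm (Pk - xs))^2)"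
  proof (intro allI impI)
    fix k xs assume sol: "\<forall>j<m. inner (a j) xs = b j"
    have s: "ls_iter m a b x0 (Suc k) = ls_step m a b (ls_iter m a b x0 k)"
      unfolding ls_iter_def by simp
    show "let xk = ls_iter m a b x0 k; xk1 = ls_iter m a b x0 (Suc k);
                    Pk = kcycle m a b xk
                in xk1 = (ARG_MIN (\<lambda>\<xi>. (norm (\<xi> - xs))^2) \<xi>. \<xi> \<in> affine hull {xk, Pk})
                 \<and> (norm (xk - xs))^2 - (norm (xk1 - xs))^2
                     = (resid_sq m a b xk + (norm (Pk - xk))^2)^2 / (4 * (norm (Pk - xk))^2)
                 \<and> (norm (xk1 - xs))^2 \<le> (norm (Pk - xs))^2"
      unfolding Let_def s by (rule step_props[OF rows_nz sol nf[rule_format]])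
  qed
  then show ?thesis by (rule disjI2[OF conjI[OF nf]])
qed

end
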